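(* Let $(Z_n)_{n\ge0}$ be a linear fractional Galton–Watson process in i.i.d. random environment (as in the context), fix $n\in\mathbb{N}$, and for $0\le m\le n$ let $Z_{m,n}$ be the number of individuals of generation $m$ that have at least one descendant in generation $n$. Then $(Z_{m,n})_{0\le m\le n}$ is nondecreasing in $m$ and $$\mathbf{P}^{(1:n)}(Z_{m,n}\in\cdot\mid Z_n>0)=\mathrm{Geom}_+\Big(1-\frac{R_m}{\Pi_n+R_n}\Big)\quad\text{a.s.}$$ Moreover, for $0\le l<m\le n$, under $\mathbf{P}^{(1:n)}(\cdot\mid Z_n>0)$ one has $Z_{m,n}\stackrel{d}{=}\sum_{i=1}^{Z_{l,n}}\zeta_i^{l,m}$, where $\zeta_1^{l,m},\zeta_2^{l,m},\dots$ are independent of $Z_{l,n}$, i.i.d., with common law $$\mathrm{Geom}_+\Big(1-\frac{R_m-R_l}{\Pi_n+R_n-R_l}\Big).$$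
   Context: Let $(A_n,B_n)_{n\ge1}$ be i.i.d. copies of $(A,B)$ with $\mathbb{P}(A>0,B>0,A+B\ge1)=1$; $e_n=(A_n,B_n)$. For $a,b>0$, $a+b\ge1$, $LF(a,b)$ is the distribution on $\mathbb{N}_0$ whose generating function $f$ satisfies $1/(1-f(s))=a/(1-s)+b$, $s\in[0,1)$. $\mathrm{Geom}_+(p)$ is the geometric law on $\{1,2,\dots\}$ with weights $p(1-p)^{k-1}$. $(Z_n)$, $Z_0=1$: given the environment, each individual of generation $k-1$ independently has offspring law $LF(A_k,B_k)$. $\Pi_0=1$, $\Pi_n=\prod_{k=1}^nA_k$, $R_0=0$, $R_n=\sum_{k=1}^n\Pi_{k-1}B_k$. $\mathbf{P}^{(1:n)}=\mathbb{P}(\cdot\mid e_1,\dots,e_n)$. *)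

theory Defs
  imports "HOL-Probability.Probability"
begin

definition LF :: "real \<Rightarrow> real \<Rightarrow> nat pmf" where
  "LF a b = (THE p :: nat pmf. \<forall>s::real. 0 \<le> s \<and> s < 1 \<longrightarrow>
      1 / (1 - (\<Sum>k. pmf p k * s ^ k)) = a / (1 - s) + b)"

definition geom_plus :: "real \<Rightarrow> nat pmf" where
  "geom_plus p = embed_pmf (\<lambda>k. if 1 \<le> k then p * (1 - p) ^ (k - 1) else 0)"

fun iid_list :: "nat \<Rightarrow> 'a pmf \<Rightarrow> 'a list pmf" where
  "iid_list 0 p = return_pmf []"
| "iid_list (Suc k) p = bind_pmf p (\<lambda>x. map_pmf (\<lambda>xs. x # xs) (iid_list k p))"

datatype gwtree = Node "gwtree list"

text \<open>Individuals at depth m of a tree (each as its subtree).\<close>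
fun nodes_at :: "nat \<Rightarrow> gwtree \<Rightarrow> gwtree list" where
  "nodes_at 0 t = [t]"
| "nodes_at (Suc m) (Node ts) = concat (map (nodes_at m) ts)"

text \<open>Family tree of an individual of generation k, observed for j further
generations, in the environment (a,b): each individual of generation i-1
has offspring law LF(a i, b i), independently.\<close>
fun gw_tree :: "(nat \<Rightarrow> real) \<Rightarrow> (nat \<Rightarrow> real) \<Rightarrow> nat \<Rightarrow> nat \<Rightarrow> gwtree pmf" where
  "gw_tree a b k 0 = return_pmf (Node [])"
| "gw_tree a b k (Suc j) =
     bind_pmf (LF (a (Suc k)) (b (Suc k)))
       (\<lambda>c. map_pmf Node (iid_list c (gw_tree a b (Suc k) j)))"

definition Zgen :: "nat \<Rightarrow> gwtree \<Rightarrow> nat" where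
  "Zgen m t = length (nodes_at m t)"

definition Zsurv :: "nat \<Rightarrow> nat \<Rightarrow> gwtree \<Rightarrow> nat" where
  "Zsurv m n t = length (filter (\<lambda>s. 0 < length (nodes_at (n - m) s)) (nodes_at m t))"

definition Pi_env :: "(nat \<Rightarrow> real) \<Rightarrow> nat \<Rightarrow> real" where
  "Pi_env a n = (\<Prod>k=1..n. a k)"

definition R_env :: "(nat \<Rightarrow> real) \<Rightarrow> (nat \<Rightarrow> real) \<Rightarrow> nat \<Rightarrow> real" where
  "R_env a b n = (\<Sum>k=1..n. Pi_env a (k - 1) * b k)"

end

theory Submission imports Defs begin

definition gf :: "nat pmf \<Rightarrow> real \<Rightarrow> real" where
  "gf p s = (\<Sum>k. pmf p k * s ^ k)"

lemma summable_pmf_nat: "summable (pmf (p::nat pmf))"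
  using pmf_abs_summable[of p UNIV] by (simp add: abs_summable_on_nat_iff')

lemma summable_gf: "0 \<le> s \<Longrightarrow> s \<le> 1 \<Longrightarrow> summable (\<lambda>k. pmf p k * s^k)"
  by (rule summable_comparison_test[OF _ summable_pmf_nat])
     (auto intro!: exI[of _ 0] mult_left_le power_le_one simp: abs_mult)

lemma gf_nn:
  assumes "0 \<le> s" "s \<le> 1"
  shows "(\<integral>\<^sup>+k. ennreal (s^k) \<partial>measure_pmf p) = ennreal (gf p s)"
proof -
  have "(\<integral>\<^sup>+k. ennreal (s^k) \<partial>measure_pmf p) = (\<integral>\<^sup>+k. ennreal (pmf p k * s^k) \<partial>count_space UNIV)"
    by (simp add: nn_integral_measure_pmf ennreal_mult assms)
  also have "\<dots> = (\<Sum>k. ennreal (pmf p k * s^k))" by (rule nn_integral_count_space_nat)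
  also have "\<dots> = ennreal (gf p s)" unfolding gf_def
    by (rule suminf_ennreal2) (use assms summable_gf in auto)
  finally show ?thesis .
qed

lemma gf_nonneg: "0 \<le> s \<Longrightarrow> s \<le> 1 \<Longrightarrow> 0 \<le> gf p s"
  unfolding gf_def by (intro suminf_nonneg summable_gf) auto

lemma gf_le1:
  assumes "0 \<le> s" "s \<le> 1" shows "gf p s \<le> 1"
proof -
  have "ennreal (gf p s) = (\<integral>\<^sup>+k. ennreal (s^k) \<partial>measure_pmf p)" using gf_nn[OF assms] by simp
  also have "\<dots> \<le> (\<integral>\<^sup>+k. 1 \<partial>measure_pmf p)"
    by (intro nn_integral_mono) (use assms in \<open>auto intro: power_le_one\<close>)
  also have "\<dots> = 1" by simp
  finally show ?thesis by simp
qed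

lemma gf_eqI:
  assumes "0 \<le> s" "s \<le> 1" "0 \<le> r" "(\<integral>\<^sup>+k. ennreal (s^k) \<partial>measure_pmf p) = ennreal r"
  shows "gf p s = r"
  using assms gf_nn[of s p] gf_nonneg[of s p] by simp

lemma gf_return: "0 \<le> s \<Longrightarrow> s \<le> 1 \<Longrightarrow> gf (return_pmf k) s = s ^ k"
  by (rule gf_eqI) auto

lemma gf_zero: "gf p 0 = pmf p 0"
  unfolding gf_def using powser_zero[of "pmf p"] by simp

lemma iid_list_map: "iid_list c (map_pmf f p) = map_pmf (map f) (iid_list c p)"
  by (induction c) (simp_all add: map_bind_pmf bind_map_pmf map_pmf_comp)

lemma gf_iid_sum:
  assumes "0 \<le> s" "s \<le> 1"
  shows "gf (map_pmf sum_list (iid_list c q)) s = gf q s ^ c"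
proof (induction c)
  case 0 then show ?case using assms by (simp add: gf_return)
next
  case (Suc c)
  have "(\<integral>\<^sup>+k. ennreal (s^k) \<partial>measure_pmf (map_pmf sum_list (iid_list (Suc c) q)))
     = (\<integral>\<^sup>+x. (\<integral>\<^sup>+ys. ennreal (s^x) * ennreal (s ^ sum_list ys) \<partial>iid_list c q) \<partial>q)"
    using assms by (simp add: power_add ennreal_mult)
  also have "\<dots> = (\<integral>\<^sup>+x. ennreal (s^x) * ennreal (gf q s ^ c) \<partial>q)"
  proof -
    have "(\<integral>\<^sup>+ys. ennreal (s ^ sum_list ys) \<partial>iid_list c q) = ennreal (gf q s ^ c)"
      using gf_nn[OF assms, of "map_pmf sum_list (iid_list c q)"] Suc by simp
    then show ?thesis by (simp add: nn_integral_cmult)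
  qed
  also have "\<dots> = ennreal (gf q s) * ennreal (gf q s ^ c)"
    by (simp add: nn_integral_multc gf_nn[OF assms])
  also have "\<dots> = ennreal (gf q s ^ Suc c)"
    using gf_nonneg[OF assms] by (simp add: ennreal_mult[symmetric] mult.commute)
  finally show ?case using assms gf_nonneg[OF assms] by (intro gf_eqI) auto
qed

lemma gf_comp:
  assumes "0 \<le> s" "s \<le> 1"
  shows "gf (bind_pmf p (\<lambda>c. map_pmf sum_list (iid_list c q))) s = gf p (gf q s)"
proof -
  have u: "0 \<le> gf q s" "gf q s \<le> 1" using gf_nonneg[OF assms] gf_le1[OF assms] by auto
  have "(\<integral>\<^sup>+k. ennreal (s^k) \<partial>measure_pmf (bind_pmf p (\<lambda>c. map_pmf sum_list (iid_list c q))))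
      = (\<integral>\<^sup>+c. ennreal (gf (map_pmf sum_list (iid_list c q)) s) \<partial>p)"
    by (subst nn_integral_bind_pmf) (simp only: gf_nn[OF assms])
  also have "\<dots> = (\<integral>\<^sup>+c. ennreal (gf q s ^ c) \<partial>p)" by (simp add: gf_iid_sum[OF assms])
  also have "\<dots> = ennreal (gf p (gf q s))" by (rule gf_nn[OF u])
  finally show ?thesis using assms u gf_nonneg[OF u] by (intro gf_eqI) auto
qed


lemma gf_unique:
  assumes eq: "\<And>s. 0 \<le> s \<Longrightarrow> s < 1 \<Longrightarrow> gf p s = gf q s"
  shows "p = q"
proof -
  define c where "c k = pmf p k - pmf q k" for k
  have cb: "\<bar>c k\<bar> \<le> 1" for k
    unfolding c_def using pmf_le_1[of p k] pmf_le_1[of q k] pmf_nonneg[of p k] pmf_nonneg[of q k] by linarith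
  have zero: "(\<Sum>k. c k * s^k) = 0" and summ: "summable (\<lambda>k. c k * s^k)" if "0 \<le> s" "s < 1" for s
  proof -
    have "(\<lambda>k. c k * s^k) = (\<lambda>k. pmf p k * s^k - pmf q k * s^k)" by (auto simp: c_def algebra_simps)
    moreover have "summable (\<lambda>k. pmf p k * s^k - pmf q k * s^k)"
      using summable_gf[of s p] summable_gf[of s q] that by (intro summable_diff) auto
    moreover have "(\<Sum>k. pmf p k * s^k - pmf q k * s^k) = gf p s - gf q s"
      unfolding gf_def using summable_gf[of s p] summable_gf[of s q] that by (simp add: suminf_diff)
    ultimately show "(\<Sum>k. c k * s^k) = 0" "summable (\<lambda>k. c k * s^k)" using eq[OF that] by auto
  qed
  have "\<forall>k. c k = 0"
  proof (rule ccontr)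
    assume "\<not> (\<forall>k. c k = 0)"
    then have ex: "\<exists>k. c k \<noteq> 0" by auto
    define k0 where "k0 = (LEAST k. c k \<noteq> 0)"
    have ck0: "c k0 \<noteq> 0" unfolding k0_def by (rule LeastI_ex[OF ex])
    have below: "c k = 0" if "k < k0" for k using not_less_Least[of k "\<lambda>k. c k \<noteq> 0"] that unfolding k0_def by auto
    define e where "e = \<bar>c k0\<bar>"
    have e: "0 < e" using ck0 unfolding e_def by auto
    define s where "s = min (1/2) (e/4)"
    have s: "0 < s" "s \<le> 1/2" "s \<le> e/4" using e unfolding s_def by auto
    define g where "g n = c (n + k0) * s^n" for n
    have gb: "norm (g n) \<le> s^n" for n
      unfolding g_def using cb[of "n+k0"] s by (auto simp: abs_mult intro!: mult_left_le_one_le)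
    have sg: "summable (\<lambda>n. s^n)" using s by (intro summable_geometric) auto
    have gsum: "summable g" by (rule summable_comparison_test[OF _ sg]) (use gb in auto)
    have "0 = (\<Sum>k. c k * s^k)" using zero[of s] s by auto
    also have "\<dots> = (\<Sum>n. c (n + k0) * s^(n + k0)) + (\<Sum>i<k0. c i * s^i)"
      by (rule suminf_split_initial_segment) (use summ[of s] s in auto)
    also have "(\<Sum>i<k0. c i * s^i) = 0" using below by auto
    also have "(\<lambda>n. c (n + k0) * s^(n + k0)) = (\<lambda>n. s^k0 * g n)"
      by (auto simp: g_def power_add algebra_simps)
    also have "(\<Sum>n. s^k0 * g n) = s^k0 * suminf g" by (rule suminf_mult[OF gsum])
    finally have "suminf g = 0" using s by auto
    moreover have "suminf g = (\<Sum>n. g (n + 1)) + g 0"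
      using suminf_split_initial_segment[OF gsum, of 1] by simp
    ultimately have "c k0 = - (\<Sum>n. g (n + 1))" by (simp add: g_def)
    then have "e = norm (\<Sum>n. g (n + 1))" unfolding e_def by simp
    also have "\<dots> \<le> (\<Sum>n. s * s^n)"
    proof (rule norm_suminf_le)
      show "norm (g (n + 1)) \<le> s * s ^ n" for n using gb[of "n+1"] by simp
      show "summable (\<lambda>n. s * s^n)" using sg by (rule summable_mult)
    qed
    also have "\<dots> = s * (1 / (1 - s))" using suminf_mult[OF sg, of s] suminf_geometric[of s] s by simp
    also have "\<dots> \<le> 2 * s" using s by (simp add: field_simps)
    finally show False using s e by linarith
  qed
  then show ?thesis by (intro pmf_eqI) (simp add: c_def)
qed


lemma gf_bind_nn:
  assumes "0 \<le> s" "s \<le> 1"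
  shows "ennreal (gf (bind_pmf p f) s) = (\<integral>\<^sup>+x. ennreal (gf (f x) s) \<partial>p)"
  by (subst gf_nn[OF assms, symmetric], subst nn_integral_bind_pmf) (simp only: gf_nn[OF assms])

lemma gf_map_nn:
  assumes "0 \<le> s" "s \<le> 1"
  shows "ennreal (gf (map_pmf f p) s) = (\<integral>\<^sup>+x. ennreal (s ^ f x) \<partial>p)"
  by (subst gf_nn[OF assms, symmetric]) simp

lemma gf_map_Suc:
  assumes "0 \<le> s" "s \<le> 1"
  shows "gf (map_pmf Suc p) s = s * gf p s"
proof -
  have "ennreal (gf (map_pmf Suc p) s) = (\<integral>\<^sup>+x. ennreal s * ennreal (s ^ x) \<partial>p)"
    using assms by (simp add: gf_map_nn ennreal_mult)
  also have "\<dots> = ennreal s * ennreal (gf p s)" by (simp add: nn_integral_cmult gf_nn[OF assms])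
  also have "\<dots> = ennreal (s * gf p s)" using assms gf_nonneg[OF assms] by (simp add: ennreal_mult)
  finally show ?thesis using assms gf_nonneg[OF assms] gf_nonneg[of s "map_pmf Suc p"] by simp
qed

lemma gf_geometric:
  assumes "0 < p" "p \<le> 1" "0 \<le> s" "s \<le> 1"
  shows "gf (geometric_pmf p) s = p / (1 - (1 - p) * s)"
proof -
  have n: "norm ((1 - p) * s) < 1"
  proof -
    have "(1 - p) * s \<le> 1 - p" using assms by (intro mult_left_le) auto
    moreover have "0 \<le> (1 - p) * s" using assms by auto
    ultimately show ?thesis using assms by auto
  qed
  have "(\<lambda>k. p * ((1 - p) * s) ^ k) sums (p * (1 / (1 - (1 - p) * s)))"
    by (intro sums_mult geometric_sums n)
  moreover have "(\<lambda>k. pmf (geometric_pmf p) k * s ^ k) = (\<lambda>k. p * ((1 - p) * s) ^ k)"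
    using assms by (auto simp: power_mult_distrib)
  ultimately show ?thesis unfolding gf_def by (simp add: sums_iff)
qed

lemma geom_plus_eq:
  assumes "0 < p" "p \<le> 1"
  shows "geom_plus p = map_pmf Suc (geometric_pmf p)"
proof -
  have "(\<lambda>k. if 1 \<le> k then p * (1 - p) ^ (k - 1) else 0) = pmf (map_pmf Suc (geometric_pmf p))"
  proof
    fix k :: nat
    show "(if 1 \<le> k then p * (1 - p) ^ (k - 1) else 0) = pmf (map_pmf Suc (geometric_pmf p)) k"
    proof (cases k)
      case 0
      have "pmf (map_pmf Suc (geometric_pmf p)) 0 = 0" by (rule pmf_map_outside) auto
      then show ?thesis using 0 by simp
    next
      case (Suc j)
      then show ?thesis using assms by (simp add: pmf_map_inj')
    qed
  qed
  then show ?thesis unfolding geom_plus_def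
    using type_definition.Rep_inverse[OF td_pmf_embed_pmf] by metis
qed

lemma gf_geom_plus:
  assumes "0 < p" "p \<le> 1" "0 \<le> s" "s \<le> 1"
  shows "gf (geom_plus p) s = p * s / (1 - (1 - p) * s)"
  using assms by (simp add: geom_plus_eq gf_map_Suc gf_geometric)

definition lft :: "real \<Rightarrow> real \<Rightarrow> nat pmf \<Rightarrow> bool" where
  "lft \<alpha> \<beta> q \<longleftrightarrow> (\<forall>s. 0 \<le> s \<and> s < 1 \<longrightarrow> 1 / (1 - gf q s) = \<alpha> / (1 - s) + \<beta>)"

lemma lft_unique:
  assumes "lft \<alpha> \<beta> p" "lft \<alpha> \<beta> q" shows "p = q"
proof (rule gf_unique)
  fix s :: real assume s: "0 \<le> s" "s < 1"
  have "1 / (1 - gf p s) = 1 / (1 - gf q s)" using assms s unfolding lft_def by auto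
  then have "inverse (1 - gf p s) = inverse (1 - gf q s)" by (simp add: inverse_eq_divide)
  then show "gf p s = gf q s" by simp
qed

definition lfp :: "real \<Rightarrow> real \<Rightarrow> nat pmf" where
  "lfp \<alpha> \<beta> = bind_pmf (bernoulli_pmf (1 / (\<alpha> + \<beta>)))
     (\<lambda>x. if x then map_pmf Suc (geometric_pmf (\<alpha> / (\<alpha> + \<beta>))) else return_pmf 0)"

lemma ennreal_lin:
  fixes A B C D :: real
  assumes "0 \<le> A" "0 \<le> B" "0 \<le> C" "0 \<le> D"
  shows "ennreal A * ennreal B + ennreal C * ennreal D = ennreal (A * B + C * D)"
  using assms by (simp add: ennreal_mult ennreal_plus)

lemma gf_lfp:
  assumes "0 < \<alpha>" "0 \<le> \<beta>" "1 \<le> \<alpha> + \<beta>" "0 \<le> s" "s \<le> 1"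
  shows "gf (lfp \<alpha> \<beta>) s = s * (\<alpha> / (\<alpha> + \<beta>) / (1 - (1 - \<alpha> / (\<alpha> + \<beta>)) * s)) * (1 / (\<alpha> + \<beta>))
            + 1 * (1 - 1 / (\<alpha> + \<beta>))" (is "_ = ?r")
proof -
  define c where "c = \<alpha> + \<beta>"
  have cpos: "1 \<le> c" using assms unfolding c_def by auto
  have c: "0 < \<alpha> / c" "\<alpha> / c \<le> 1" "0 \<le> 1 / c" "1 / c \<le> 1"
    using assms unfolding c_def by (auto simp: field_simps)
  have "(1 - \<alpha> / c) * s \<le> 1 - \<alpha> / c"
    by (rule mult_left_le) (use c assms in auto)
  then have lt: "(1 - \<alpha> / c) * s < 1" using c by linarith
  then have t0: "0 \<le> \<alpha> / c / (1 - (1 - \<alpha> / c) * s)"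
    using c assms by (intro divide_nonneg_nonneg) auto
  have t1: "0 \<le> 1 - 1 / c" using c by auto
  have t2: "0 \<le> s * (\<alpha> / c / (1 - (1 - \<alpha> / c) * s))"
    by (rule mult_nonneg_nonneg) (use t0 assms in auto)
  have r0: "0 \<le> ?r" unfolding c_def[symmetric]
    by (intro add_nonneg_nonneg mult_nonneg_nonneg t2 c(3) t1) auto
  have "ennreal (gf (lfp \<alpha> \<beta>) s) = ennreal (s * (\<alpha> / c / (1 - (1 - \<alpha> / c) * s))) * ennreal (1 / c)
            + ennreal 1 * ennreal (1 - 1 / c)"
    unfolding lfp_def c_def[symmetric] using assms c
    by (simp add: gf_bind_nn gf_map_Suc gf_geometric gf_return ennreal_minus)
  also have "\<dots> = ennreal ?r" unfolding c_def[symmetric]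
    by (rule ennreal_lin[OF t2 c(3) _ t1]) simp
  finally show ?thesis using gf_nonneg[OF assms(4,5), of "lfp \<alpha> \<beta>"] r0
    by (subst (asm) ennreal_inj) auto
qed


lemma lft_lfp:
  assumes "0 < \<alpha>" "0 \<le> \<beta>" "1 \<le> \<alpha> + \<beta>"
  shows "lft \<alpha> \<beta> (lfp \<alpha> \<beta>)"
  unfolding lft_def
proof (intro allI impI, elim conjE)
  fix s :: real assume s: "0 \<le> s" "s < 1"
  define c where "c = \<alpha> + \<beta>"
  have c0: "0 < c" using assms unfolding c_def by auto
  have bs: "\<beta> * s \<le> \<beta>" using assms s by (intro mult_left_le) auto
  have d0: "0 < c - \<beta> * s" using assms bs unfolding c_def by auto
  have e1: "1 - (1 - \<alpha> / c) * s = (c - \<beta> * s) / c" using c0 unfolding c_def by (simp add: field_simps)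
  have e2: "\<alpha> / c / ((c - \<beta> * s) / c) = \<alpha> / (c - \<beta> * s)" using c0 d0 by (simp add: field_simps)
  have geq: "gf (lfp \<alpha> \<beta>) s = s * (\<alpha> / (c - \<beta> * s)) * (1 / c) + 1 * (1 - 1 / c)"
    using gf_lfp[OF assms s(1)] s unfolding c_def[symmetric] e1 e2 by simp
  have "1 - gf (lfp \<alpha> \<beta>) s = ((c - \<beta> * s) - s * \<alpha>) / (c * (c - \<beta> * s))"
    unfolding geq using c0 d0 by (simp add: field_simps)
  also have "(c - \<beta> * s) - s * \<alpha> = c * (1 - s)" unfolding c_def by (simp add: algebra_simps)
  also have "c * (1 - s) / (c * (c - \<beta> * s)) = (1 - s) / (c - \<beta> * s)" using c0 by simp
  finally have "1 - gf (lfp \<alpha> \<beta>) s = (1 - s) / (c - \<beta> * s)" .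
  then have "1 / (1 - gf (lfp \<alpha> \<beta>) s) = (c - \<beta> * s) / (1 - s)" by simp
  also have "\<dots> = \<alpha> / (1 - s) + \<beta>" using s unfolding c_def by (simp add: field_simps)
  finally show "1 / (1 - gf (lfp \<alpha> \<beta>) s) = \<alpha> / (1 - s) + \<beta>" .
qed

lemma LF_eq:
  assumes "0 < a" "0 \<le> b" "1 \<le> a + b"
  shows "LF a b = lfp a b"
proof -
  have eq: "(\<forall>s::real. 0 \<le> s \<and> s < 1 \<longrightarrow> 1 / (1 - (\<Sum>k. pmf p k * s ^ k)) = a / (1 - s) + b) \<longleftrightarrow> lft a b p"
    for p unfolding lft_def gf_def ..
  show ?thesis unfolding LF_def eq
    by (rule the_equality) (auto intro: lft_lfp[OF assms] lft_unique[OF _ lft_lfp[OF assms]])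
qed

lemma lft_LF:
  assumes "0 < a" "0 \<le> b" "1 \<le> a + b"
  shows "lft a b (LF a b)"
  using LF_eq[OF assms] lft_lfp[OF assms] by simp

lemma lft_pos:
  assumes "lft \<alpha> \<beta> q" "0 < \<alpha>" "0 \<le> \<beta>" "0 \<le> s" "s < 1"
  shows "gf q s < 1"
proof -
  have "1 / (1 - gf q s) = \<alpha> / (1 - s) + \<beta>" using assms unfolding lft_def by auto
  moreover have "0 < \<alpha> / (1 - s) + \<beta>" using assms by (intro add_pos_nonneg divide_pos_pos) auto
  ultimately have "1 - gf q s \<noteq> 0" by auto
  moreover have "gf q s \<le> 1" using gf_le1[of s q] assms by auto
  ultimately show ?thesis by auto
qed

lemma lft_comp:
  assumes P: "lft a1 b1 P" and Y: "lft \<alpha> \<beta> Y" and "0 < \<alpha>" "0 \<le> \<beta>"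
  shows "lft (a1 * \<alpha>) (a1 * \<beta> + b1) (bind_pmf P (\<lambda>c. map_pmf sum_list (iid_list c Y)))"
  unfolding lft_def
proof (intro allI impI, elim conjE)
  fix s :: real assume s: "0 \<le> s" "s < 1"
  define u where "u = gf Y s"
  have u: "0 \<le> u" "u < 1" unfolding u_def using gf_nonneg[of s Y] lft_pos[OF Y assms(3,4) s] s by auto
  have "1 / (1 - gf (bind_pmf P (\<lambda>c. map_pmf sum_list (iid_list c Y))) s) = 1 / (1 - gf P u)"
    using s by (simp add: gf_comp u_def)
  also have "\<dots> = a1 / (1 - u) + b1" using P u unfolding lft_def by auto
  also have "\<dots> = a1 * (1 / (1 - u)) + b1" by simp
  also have "1 / (1 - u) = \<alpha> / (1 - s) + \<beta>" using Y s unfolding lft_def u_def by auto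
  finally show "1 / (1 - gf (bind_pmf P (\<lambda>c. map_pmf sum_list (iid_list c Y))) s) = a1 * \<alpha> / (1 - s) + (a1 * \<beta> + b1)"
    by (simp add: algebra_simps)
qed

lemma lft_indicator:
  assumes "lft \<alpha> \<beta> q"
  shows "lft (\<alpha> + \<beta>) 0 (map_pmf (\<lambda>z. if 0 < z then 1 else 0) q)"
  unfolding lft_def
proof (intro allI impI, elim conjE)
  fix s :: real assume s: "0 \<le> s" "s < 1"
  have g0: "0 \<le> gf q 0" using gf_nonneg[of 0 q] by simp
  have "ennreal (gf (map_pmf (\<lambda>z. if 0 < z then 1 else 0) q) s)
        = (\<integral>\<^sup>+z. ennreal s + ennreal (1 - s) * ennreal (0 ^ z) \<partial>q)"
    using s by (subst gf_map_nn) (auto intro!: nn_integral_cong simp: ennreal_plus[symmetric])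
  also have "\<dots> = ennreal s + ennreal (1 - s) * ennreal (gf q 0)"
    by (simp add: nn_integral_add nn_integral_cmult gf_nn[of 0 q, simplified])
  also have "\<dots> = ennreal (s + (1 - s) * gf q 0)"
    using s g0 by (simp add: ennreal_plus ennreal_mult)
  finally have e: "gf (map_pmf (\<lambda>z. if 0 < z then 1 else 0) q) s = s + (1 - s) * gf q 0"
    using s g0 gf_nonneg[of s "map_pmf (\<lambda>z. if 0 < z then 1 else 0) q"] by (subst (asm) ennreal_inj) auto
  have h0: "1 / (1 - gf q 0) = \<alpha> + \<beta>" using assms unfolding lft_def by auto
  have "1 / (1 - gf (map_pmf (\<lambda>z. if 0 < z then 1 else 0) q) s) = 1 / ((1 - s) * (1 - gf q 0))"
    unfolding e by (simp add: algebra_simps)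
  also have "\<dots> = (1 / (1 - s)) * (1 / (1 - gf q 0))" by simp
  also have "\<dots> = (\<alpha> + \<beta>) / (1 - s) + 0" unfolding h0 by simp
  finally show "1 / (1 - gf (map_pmf (\<lambda>z. if 0 < z then 1 else 0) q) s) = (\<alpha> + \<beta>) / (1 - s) + 0" .
qed


lemma pmf_lfp:
  assumes "0 < \<alpha>" "0 \<le> \<beta>" "1 \<le> \<alpha> + \<beta>"
  shows "pmf (lfp \<alpha> \<beta>) k = (if k = 0 then 1 - 1 / (\<alpha> + \<beta>)
            else pmf (map_pmf Suc (geometric_pmf (\<alpha> / (\<alpha> + \<beta>)))) k * (1 / (\<alpha> + \<beta>)))"
proof -
  have c: "0 \<le> 1 / (\<alpha> + \<beta>)" "1 / (\<alpha> + \<beta>) \<le> 1" using assms by auto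
  have z: "pmf (map_pmf Suc (geometric_pmf (\<alpha> / (\<alpha> + \<beta>)))) 0 = 0" by (rule pmf_map_outside) auto
  show ?thesis unfolding lfp_def pmf_bind using c z by (cases k) auto
qed

lemma lft_cond:
  assumes q: "lft \<alpha> \<beta> q" and ab: "0 < \<alpha>" "0 \<le> \<beta>"
  shows "set_pmf q \<inter> {k. 0 < k} \<noteq> {}" "cond_pmf q {k. 0 < k} = geom_plus (\<alpha> / (\<alpha> + \<beta>))"
proof -
  define c where "c = \<alpha> + \<beta>"
  have g0: "0 \<le> gf q 0" "gf q 0 < 1" using gf_nonneg[of 0 q] lft_pos[OF q ab, of 0] by auto
  have "1 / (1 - gf q 0) = c" using q unfolding lft_def c_def by auto
  then have "c * (1 - gf q 0) = 1" using g0 by (auto simp: field_simps)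
  moreover have "c * (1 - gf q 0) \<le> c * 1"
    by (rule mult_left_mono) (use g0 ab in \<open>auto simp: c_def\<close>)
  ultimately have c1: "1 \<le> c" by simp
  have qeq: "q = lfp \<alpha> \<beta>" using lft_unique[OF q lft_lfp[OF ab]] c1 unfolding c_def by auto
  have p: "0 < \<alpha> / c" "\<alpha> / c \<le> 1" using ab c1 unfolding c_def by auto
  have pm: "pmf q k = (if k = 0 then 1 - 1 / c else pmf (map_pmf Suc (geometric_pmf (\<alpha> / c))) k * (1 / c))" for k
    unfolding qeq c_def using pmf_lfp[OF ab] c1 unfolding c_def by auto
  have "pmf q 1 = \<alpha> / c * (1 / c)" unfolding pm using p
    by (simp add: pmf_map_inj'[where x=0, simplified])
  moreover have "\<alpha> / c * (1 / c) > 0" using p c1 by (intro mult_pos_pos) auto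
  ultimately have "pmf q 1 > 0" by simp
  then have "1 \<in> set_pmf q" by (simp add: set_pmf_iff)
  then show ne: "set_pmf q \<inter> {k. 0 < k} \<noteq> {}" by auto
  have "measure_pmf.prob q {k. 0 < k} = measure_pmf.prob q (UNIV - {0})"
    by (intro arg_cong[where f="measure_pmf.prob q"]) auto
  also have "\<dots> = 1 - pmf q 0" using measure_pmf.prob_compl[of "{0}" q] by (simp add: measure_pmf_single)
  also have "\<dots> = 1 / c" unfolding pm by simp
  finally have m: "measure_pmf.prob q {k. 0 < k} = 1 / c" .
  have "cond_pmf q {k. 0 < k} = map_pmf Suc (geometric_pmf (\<alpha> / c))"
  proof (rule pmf_eqI)
    fix k :: nat
    have z: "pmf (map_pmf Suc (geometric_pmf (\<alpha> / c))) 0 = 0" by (rule pmf_map_outside) auto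
    show "pmf (cond_pmf q {k. 0 < k}) k = pmf (map_pmf Suc (geometric_pmf (\<alpha> / c))) k"
      unfolding pmf_cond[OF ne] m using z c1 by (cases k) (auto simp: pm)
  qed
  then show "cond_pmf q {k. 0 < k} = geom_plus (\<alpha> / (\<alpha> + \<beta>))"
    using geom_plus_eq[OF p] unfolding c_def by simp
qed

lemma geom_compound:
  assumes p: "0 < p" "p \<le> 1" and q: "0 < q" "q \<le> 1"
  shows "bind_pmf (geom_plus p) (\<lambda>z. map_pmf sum_list (iid_list z (geom_plus q))) = geom_plus (p * q)"
proof (rule gf_unique)
  fix s :: real assume s: "0 \<le> s" "s < 1"
  have pq: "0 < p * q" "p * q \<le> 1" using p q by (auto intro: mult_le_one)
  define u where "u = gf (geom_plus q) s"
  have u: "0 \<le> u" "u \<le> 1" unfolding u_def using gf_nonneg[of s] gf_le1[of s] s by auto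
  have ue: "u = q * s / (1 - (1 - q) * s)" unfolding u_def using gf_geom_plus[OF q] s by auto
  have "(1 - q) * s \<le> s" using q s by (intro mult_left_le_one_le) auto
  then have D: "0 < 1 - (1 - q) * s" using s by auto
  have E: "0 < 1 - s + p * q * s" using s pq by (auto intro: add_pos_nonneg)
  have "gf (bind_pmf (geom_plus p) (\<lambda>z. map_pmf sum_list (iid_list z (geom_plus q)))) s
       = gf (geom_plus p) u" unfolding u_def using s by (simp add: gf_comp)
  also have "\<dots> = p * u / (1 - (1 - p) * u)" using gf_geom_plus[OF p u] .
  also have "1 - (1 - p) * u = (1 - s + p * q * s) / (1 - (1 - q) * s)"
    unfolding ue using D by (simp add: field_simps)
  also have "p * u / ((1 - s + p * q * s) / (1 - (1 - q) * s)) = p * q * s / (1 - s + p * q * s)"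
  proof -
    have aux: "\<And>(a::real) D X. D \<noteq> 0 \<Longrightarrow> X \<noteq> 0 \<Longrightarrow> p * (a / D) / (X / D) = p * a / X"
      by (simp add: field_simps)
    show ?thesis unfolding ue using aux[of "1 - (1 - q) * s" "1 - s + p * q * s" "q * s"] D E
      by (simp add: mult.assoc)
  qed
  also have "\<dots> = gf (geom_plus (p * q)) s" using gf_geom_plus[OF pq, of s] s
    by (simp add: algebra_simps)
  finally show "gf (bind_pmf (geom_plus p) (\<lambda>z. map_pmf sum_list (iid_list z (geom_plus q)))) s
      = gf (geom_plus (p * q)) s" .
qed


section \<open>Trees\<close>

lemma nodes_at_add: "nodes_at (i + k) t = concat (map (nodes_at k) (nodes_at i t))"
proof (induction i arbitrary: t)
  case 0 then show ?case by simp
next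
  case (Suc i)
  obtain ts where t: "t = Node ts" by (cases t)
  have "nodes_at (Suc i + k) t = concat (map (\<lambda>x. concat (map (nodes_at k) (nodes_at i x))) ts)"
  proof -
    have "nodes_at (i + k) = (\<lambda>x. concat (map (nodes_at k) (nodes_at i x)))"
      using Suc.IH by (intro ext)
    then show ?thesis unfolding t by simp
  qed
  also have "\<dots> = concat (concat (map (\<lambda>x. map (nodes_at k) (nodes_at i x)) ts))"
    by (induction ts) auto
  finally show ?case unfolding t by (simp add: map_concat o_def)
qed

lemma Zgen_Node: "Zgen (Suc j) (Node ts) = sum_list (map (Zgen j) ts)"
  by (simp add: Zgen_def[abs_def] length_concat o_def)

lemma Zsurv_Node: "Zsurv (Suc m) (Suc j) (Node ts) = sum_list (map (Zsurv m j) ts)"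
  by (simp add: Zsurv_def[abs_def] filter_concat length_concat o_def)

lemma Zsurv_0: "Zsurv 0 j t = (if 0 < Zgen j t then 1 else 0)"
  by (simp add: Zsurv_def Zgen_def)

lemma length_filter_sum: "length (filter P xs) = sum_list (map (\<lambda>x. if P x then 1 else 0) xs)"
  by (induction xs) auto

lemma surv_pos:
  assumes "m \<le> n" shows "0 < Zsurv m n t \<longleftrightarrow> 0 < Zgen n t"
proof -
  have n: "n = m + (n - m)" using assms by simp
  have "Zgen n t = length (concat (map (nodes_at (n - m)) (nodes_at m t)))"
    unfolding Zgen_def by (subst n, subst nodes_at_add) simp
  then show ?thesis unfolding Zsurv_def
    by (auto simp: filter_empty_conv length_greater_0_conv[symmetric] simp del: length_greater_0_conv)
qed

lemma Zsurv_split: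
  assumes "l \<le> m" "m \<le> n"
  shows "Zsurv m n t = sum_list (map (Zsurv (m - l) (n - l)) (nodes_at l t))"
proof -
  have m: "m = l + (m - l)" using assms by simp
  have nm: "n - l - (m - l) = n - m" using assms by simp
  show ?thesis unfolding Zsurv_def nm
    by (subst m, subst nodes_at_add) (simp add: filter_concat length_concat o_def)
qed

lemma Zsurv_mono:
  assumes "l \<le> m" "m \<le> n"
  shows "Zsurv l n t \<le> Zsurv m n t"
proof -
  have "Zsurv l n t = sum_list (map (\<lambda>s. if 0 < Zgen (n - l) s then 1 else 0) (nodes_at l t))"
    unfolding Zsurv_def Zgen_def by (rule length_filter_sum)
  also have "\<dots> \<le> sum_list (map (Zsurv (m - l) (n - l)) (nodes_at l t))"
  proof (rule sum_list_mono)
    fix s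
    have "0 < Zgen (n - l) s \<Longrightarrow> 0 < Zsurv (m - l) (n - l) s" using surv_pos[of "m - l" "n - l" s] assms by auto
    then show "(if 0 < Zgen (n - l) s then 1 else 0) \<le> Zsurv (m - l) (n - l) s" by auto
  qed
  also have "\<dots> = Zsurv m n t" using Zsurv_split[OF assms] by simp
  finally show ?thesis .
qed

section \<open>Environment\<close>

definition envok :: "(nat \<Rightarrow> real) \<Rightarrow> (nat \<Rightarrow> real) \<Rightarrow> nat \<Rightarrow> bool" where
  "envok a b j \<longleftrightarrow> (\<forall>k. 1 \<le> k \<and> k \<le> j \<longrightarrow> 0 < a k \<and> 0 < b k \<and> 1 \<le> a k + b k)"

lemma envok_shift: "envok a b (Suc j) \<Longrightarrow> envok (\<lambda>i. a (Suc i)) (\<lambda>i. b (Suc i)) j"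
  unfolding envok_def by auto

lemma gw_shift: "gw_tree a b (Suc k) j = gw_tree (\<lambda>i. a (Suc i)) (\<lambda>i. b (Suc i)) k j"
  by (induction j arbitrary: k) simp_all

lemma Pi_Suc: "Pi_env a (Suc j) = a 1 * Pi_env (\<lambda>i. a (Suc i)) j"
  unfolding Pi_env_def
  by (simp add: prod.shift_bounds_cl_Suc_ivl[of a 0 j, simplified] prod.atLeast_Suc_atMost[of 0 j])

lemma Pi_0: "Pi_env a 0 = 1" by (simp add: Pi_env_def)
lemma R_0: "R_env a b 0 = 0" by (simp add: R_env_def)

lemma R_Suc: "R_env a b (Suc j) = b 1 + a 1 * R_env (\<lambda>i. a (Suc i)) (\<lambda>i. b (Suc i)) j"
proof -
  have "R_env a b (Suc j) = (\<Sum>i=0..j. Pi_env a i * b (Suc i))"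
    unfolding R_env_def using sum.shift_bounds_cl_Suc_ivl[of "\<lambda>k. Pi_env a (k - 1) * b k" 0 j] by simp
  also have "\<dots> = Pi_env a 0 * b 1 + (\<Sum>i=1..j. Pi_env a i * b (Suc i))"
    by (simp add: sum.atLeast_Suc_atMost[of 0 j])
  also have "(\<Sum>i=1..j. Pi_env a i * b (Suc i)) = (\<Sum>i=1..j. a 1 * (Pi_env (\<lambda>i. a (Suc i)) (i - 1) * b (Suc i)))"
  proof (rule sum.cong)
    fix i assume "i \<in> {1..j}"
    then have "i = Suc (i - 1)" by auto
    then have "Pi_env a i = a 1 * Pi_env (\<lambda>i. a (Suc i)) (i - 1)" by (metis Pi_Suc)
    then show "Pi_env a i * b (Suc i) = a 1 * (Pi_env (\<lambda>i. a (Suc i)) (i - 1) * b (Suc i))" by simp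
  qed simp
  finally show ?thesis unfolding R_env_def by (simp add: Pi_0 sum_distrib_left)
qed

lemma Pi_pos: "envok a b j \<Longrightarrow> i \<le> j \<Longrightarrow> 0 < Pi_env a i"
  unfolding Pi_env_def envok_def by (intro prod_pos) auto

lemma R_mono: assumes "envok a b j" "l \<le> m" "m \<le> j" shows "R_env a b l \<le> R_env a b m"
  unfolding R_env_def
proof (rule sum_mono2)
  show "0 \<le> Pi_env a (k - 1) * b k" if "k \<in> {1..m} - {1..l}" for k
  proof -
    have "k - 1 \<le> j" "1 \<le> k" "k \<le> j" using that assms by auto
    then show ?thesis using assms Pi_pos[OF assms(1), of "k - 1"] unfolding envok_def
      by (intro mult_nonneg_nonneg) (auto simp: less_imp_le)
  qed
qed (use assms in auto)

lemma R_nonneg: "envok a b j \<Longrightarrow> m \<le> j \<Longrightarrow> 0 \<le> R_env a b m"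
  using R_mono[of a b j 0 m] by (simp add: R_0)


section \<open>Laws\<close>

lemma tree_map:
  assumes "\<And>ts. X (Node ts) = sum_list (map Y ts)"
  shows "map_pmf X (gw_tree a b 0 (Suc j)) = bind_pmf (LF (a 1) (b 1))
     (\<lambda>c. map_pmf sum_list (iid_list c (map_pmf Y (gw_tree (\<lambda>i. a (Suc i)) (\<lambda>i. b (Suc i)) 0 j))))"
  by (simp add: map_bind_pmf map_pmf_comp iid_list_map gw_shift[of a b 0] o_def assms)

lemma lft_step:
  assumes env: "envok a b (Suc j)"
    and X: "\<And>ts. X (Node ts) = sum_list (map Y ts)"
    and Y: "lft \<alpha> \<beta> (map_pmf Y (gw_tree (\<lambda>i. a (Suc i)) (\<lambda>i. b (Suc i)) 0 j))"
    and ab: "0 < \<alpha>" "0 \<le> \<beta>"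
  shows "lft (a 1 * \<alpha>) (a 1 * \<beta> + b 1) (map_pmf X (gw_tree a b 0 (Suc j)))"
proof -
  have "0 < a 1" "0 < b 1" "1 \<le> a 1 + b 1" using env unfolding envok_def by auto
  then have "lft (a 1) (b 1) (LF (a 1) (b 1))" by (intro lft_LF) auto
  then show ?thesis unfolding tree_map[OF X] by (rule lft_comp[OF _ Y ab])
qed

lemma zgen_law:
  "envok a b j \<Longrightarrow> lft (Pi_env a j) (R_env a b j) (map_pmf (Zgen j) (gw_tree a b 0 j))"
proof (induction j arbitrary: a b)
  case 0
  have "map_pmf (Zgen 0) (gw_tree a b 0 0) = return_pmf 1" by (simp add: Zgen_def)
  then show ?case unfolding lft_def by (simp add: Pi_0 R_0 gf_return)
next
  case (Suc j)
  have e: "envok (\<lambda>i. a (Suc i)) (\<lambda>i. b (Suc i)) j" using envok_shift[OF Suc.prems] .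
  show ?case unfolding Pi_Suc R_Suc
    using lft_step[OF Suc.prems Zgen_Node Suc.IH[OF e] Pi_pos[OF e, of j] R_nonneg[OF e, of j]]
    by (simp add: add.commute)
qed

lemma zsurv_law:
  "m \<le> j \<Longrightarrow> envok a b j \<Longrightarrow>
    lft (Pi_env a j + R_env a b j - R_env a b m) (R_env a b m) (map_pmf (Zsurv m j) (gw_tree a b 0 j))"
proof (induction m arbitrary: j a b)
  case 0
  have "map_pmf (Zsurv 0 j) (gw_tree a b 0 j) = map_pmf (\<lambda>z. if 0 < z then 1 else 0) (map_pmf (Zgen j) (gw_tree a b 0 j))"
  proof -
    have "Zsurv 0 j = (\<lambda>x. if 0 < Zgen j x then 1 else 0)" by (rule ext) (rule Zsurv_0)
    then show ?thesis by (simp add: map_pmf_comp)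
  qed
  then show ?case using lft_indicator[OF zgen_law[OF 0(2)]] by (simp add: R_0)
next
  case (Suc m)
  then obtain j' where j: "j = Suc j'" by (cases j) auto
  have mj: "m \<le> j'" using Suc.prems j by simp
  have env: "envok a b (Suc j')" using Suc.prems j by simp
  have e: "envok (\<lambda>i. a (Suc i)) (\<lambda>i. b (Suc i)) j'" using envok_shift[OF env] .
  let ?a = "\<lambda>i. a (Suc i)" and ?b = "\<lambda>i. b (Suc i)"
  have pos: "0 < Pi_env ?a j' + R_env ?a ?b j' - R_env ?a ?b m"
    using Pi_pos[OF e, of j'] R_mono[OF e mj] by simp
  have L: "lft (a 1 * (Pi_env ?a j' + R_env ?a ?b j' - R_env ?a ?b m)) (a 1 * R_env ?a ?b m + b 1)
        (map_pmf (Zsurv (Suc m) (Suc j')) (gw_tree a b 0 (Suc j')))"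
    by (rule lft_step[OF env Zsurv_Node Suc.IH[OF mj e] pos R_nonneg[OF e mj]])
  show ?case unfolding j Pi_Suc R_Suc using L by (simp add: algebra_simps)
qed


theorem lemma3p3:
  fixes a b :: "nat \<Rightarrow> real" and n :: nat
  assumes env: "\<And>k. 1 \<le> k \<Longrightarrow> k \<le> n \<Longrightarrow> 0 < a k \<and> 0 < b k \<and> 1 \<le> a k + b k"
  defines "T \<equiv> gw_tree a b 0 n"
  defines "C \<equiv> cond_pmf T {t. 0 < Zgen n t}"
  shows "(\<forall>t \<in> set_pmf T. \<forall>l m. l \<le> m \<and> m \<le> n \<longrightarrow> Zsurv l n t \<le> Zsurv m n t)
     \<and> (\<forall>m. m \<le> n \<longrightarrow>
           map_pmf (Zsurv m n) C = geom_plus (1 - R_env a b m / (Pi_env a n + R_env a b n)))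
     \<and> (\<forall>l m. l < m \<and> m \<le> n \<longrightarrow>
           map_pmf (Zsurv m n) C =
           bind_pmf (map_pmf (Zsurv l n) C)
             (\<lambda>z. map_pmf sum_list
                (iid_list z (geom_plus (1 - (R_env a b m - R_env a b l) / (Pi_env a n + R_env a b n - R_env a b l))))))"
proof -
  have env': "envok a b n" using env unfolding envok_def by auto
  define D where "D = Pi_env a n + R_env a b n"
  have Ppos: "0 < Pi_env a n" by (rule Pi_pos[OF env']) simp
  have Rle: "R_env a b m \<le> R_env a b n" if "m \<le> n" for m using R_mono[OF env' that] by simp
  have Rnn: "0 \<le> R_env a b m" if "m \<le> n" for m using R_nonneg[OF env' that] .
  have Dpos: "0 < D" using Ppos Rnn[of n] unfolding D_def by simp
  have law: "map_pmf (Zsurv m n) C = geom_plus (1 - R_env a b m / D)" if m: "m \<le> n" for m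
  proof -
    let ?f = "Zsurv m n"
    have L: "lft (D - R_env a b m) (R_env a b m) (map_pmf ?f T)"
      unfolding T_def D_def by (rule zsurv_law[OF m env'])
    have al: "0 < D - R_env a b m" using Ppos Rle[OF m] unfolding D_def by simp
    note cc = lft_cond[OF L al Rnn[OF m]]
    have pre: "?f -` {k. 0 < k} = {t. 0 < Zgen n t}" using surv_pos[OF m] by auto
    have ne: "set_pmf T \<inter> ?f -` {k. 0 < k} \<noteq> {}" using cc(1) by auto
    have "map_pmf ?f C = cond_pmf (map_pmf ?f T) {k. 0 < k}"
      unfolding C_def using cond_map_pmf[OF ne] pre by simp
    also have "\<dots> = geom_plus ((D - R_env a b m) / (D - R_env a b m + R_env a b m))" by (rule cc(2))
    also have "(D - R_env a b m) / (D - R_env a b m + R_env a b m) = 1 - R_env a b m / D"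
      using Dpos by (simp add: field_simps)
    finally show ?thesis .
  qed
  have c1: "\<forall>t \<in> set_pmf T. \<forall>l m. l \<le> m \<and> m \<le> n \<longrightarrow> Zsurv l n t \<le> Zsurv m n t"
    using Zsurv_mono by blast
  have c2: "\<forall>m. m \<le> n \<longrightarrow> map_pmf (Zsurv m n) C = geom_plus (1 - R_env a b m / (Pi_env a n + R_env a b n))"
    using law unfolding D_def by blast
  have c3: "map_pmf (Zsurv m n) C =
           bind_pmf (map_pmf (Zsurv l n) C)
             (\<lambda>z. map_pmf sum_list
                (iid_list z (geom_plus (1 - (R_env a b m - R_env a b l) / (Pi_env a n + R_env a b n - R_env a b l)))))"
    if lm: "l < m" "m \<le> n" for l m
  proof -
    have ln: "l \<le> n" using lm by simp
    have Rlm: "R_env a b l \<le> R_env a b m" using R_mono[OF env'] lm by simp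
    have Rm: "R_env a b m < D" using Ppos Rle[OF lm(2)] unfolding D_def by simp
    define p where "p = 1 - R_env a b l / D"
    define q where "q = 1 - (R_env a b m - R_env a b l) / (D - R_env a b l)"
    have Dl: "0 < D - R_env a b l" using Rm Rlm by simp
    have p: "0 < p" "p \<le> 1" unfolding p_def using Rm Rlm Rnn[OF ln] Dpos by (auto simp: field_simps)
    have q: "0 < q" "q \<le> 1" unfolding q_def using Rm Rlm Dl by (auto simp: field_simps)
    have pq: "p * q = 1 - R_env a b m / D" unfolding p_def q_def using Dpos Dl by (simp add: field_simps)
    have "map_pmf (Zsurv m n) C = geom_plus (p * q)" unfolding pq by (rule law[OF lm(2)])
    also have "\<dots> = bind_pmf (geom_plus p) (\<lambda>z. map_pmf sum_list (iid_list z (geom_plus q)))"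
      by (rule geom_compound[OF p q, symmetric])
    also have "geom_plus p = map_pmf (Zsurv l n) C" unfolding p_def by (rule law[OF ln, symmetric])
    finally show ?thesis unfolding q_def D_def .
  qed
  show ?thesis using c1 c2 c3 by blast
qed

end
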